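(* Let $p$ be an odd prime, let $v$ be an integer with $1<v<p-1$, and let $g\in\{2,\dots,p-1\}$ be a primitive root modulo $p$. Define the sequence $\gamma_v=(\gamma_v(i))_{i=1}^{p-1}$ by $\gamma_v(i)=\big(g^{i-1}\,\%\,p\big)\,\%\,v$. Then $\gamma_v$, regarded as a periodic sequence of length $p-1$, has least period exactly $p-1$.
   Context: For integers $x$ and $m\ge 1$, $x\,\%\,m$ denotes the least nonnegative remainder of $x$ upon division by $m$ (so $g^{i-1}\,\%\,p\in\{1,\dots,p-1\}$ is read as an ordinary integer before reducing modulo $v$). A sequence $s$ of length $N$ is regarded as indexed cyclically (indices modulo $N$); its least period is the smallest integer $\rho>0$ with $s(i+\rho)=s(i)$ for all indices $i$ (indices taken modulo $N$). *)

theory Defs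
  imports "HOL-Number_Theory.Number_Theory"
begin

definition gamma_seq :: "nat \<Rightarrow> nat \<Rightarrow> nat \<Rightarrow> nat \<Rightarrow> nat" where
  "gamma_seq p g v i = (g ^ (i - 1) mod p) mod v"

text \<open>A sequence s indexed by 1..N, read cyclically (index i stands for ((i-1) mod N)+1).\<close>
definition cyc_at :: "nat \<Rightarrow> (nat \<Rightarrow> 'a) \<Rightarrow> nat \<Rightarrow> 'a" where
  "cyc_at N s i = s ((i - 1) mod N + 1)"

definition is_cyc_period :: "nat \<Rightarrow> (nat \<Rightarrow> 'a) \<Rightarrow> nat \<Rightarrow> bool" where
  "is_cyc_period N s r \<longleftrightarrow> r > 0 \<and> (\<forall>i\<in>{1..N}. cyc_at N s (i + r) = s i)"

definition least_cyc_period :: "nat \<Rightarrow> (nat \<Rightarrow> 'a) \<Rightarrow> nat" where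
  "least_cyc_period N s = (LEAST r. is_cyc_period N s r)"

end

theory Submission
  imports Defs
begin

lemma key_arith:
  fixes p h v :: nat
  assumes p3: "p \<ge> 3" and h2: "2 \<le> h" and hp: "h < p"
    and A: "\<And>y. 1 \<le> y \<Longrightarrow> y \<le> p - 1 \<Longrightarrow> (h * y mod p) mod v = y mod v"
  shows "v dvd p"
proof -
  define y0 where "y0 = (p - 1) div h"
  have y0pos: "1 \<le> y0"
  proof -
    have "h div h \<le> (p - 1) div h" using hp by (intro div_le_mono) simp
    then show ?thesis using h2 unfolding y0_def by simp
  qed
  have le1: "y0 * h \<le> p - 1" unfolding y0_def by (simp add: div_mult_self_is_m mult.commute)
  have gt: "p - 1 < (y0 + 1) * h"
  proof -
    have a: "(p-1) mod h < h" using h2 by simp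
    have b: "y0*h + (p-1) mod h = p-1" unfolding y0_def by (rule div_mult_mod_eq)
    have "(y0 + 1) * h = y0*h + h" by simp
    then show ?thesis using a b by linarith
  qed
  have lt2: "(y0 + 1) * h < 2 * p" using le1 hp by (simp add: algebra_simps)
  have y0le: "y0 + 1 \<le> p - 1"
  proof -
    have "y0 * 2 \<le> y0 * h" using h2 by simp
    then show ?thesis using le1 p3 by linarith
  qed
  have m1: "(h * 1 mod p) mod v = 1 mod v" using A[of 1] p3 by simp
  have m2: "(h * y0 mod p) mod v = y0 mod v" using A[of y0] y0pos le1 y0le by simp
  have m3: "(h * (y0+1) mod p) mod v = (y0+1) mod v" using A[of "y0+1"] y0le by simp
  have e1: "h * 1 mod p = h" using hp by simp
  have e2: "h * y0 mod p = h * y0" using le1 p3 by (simp add: mult.commute)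
  have e3: "h * (y0+1) mod p = h * (y0+1) - p"
  proof -
    have "p \<le> h * (y0+1)" using gt by (simp add: mult.commute)
    moreover have "h * (y0+1) - p < p" using lt2 by (simp add: mult.commute)
    ultimately show ?thesis by (simp add: le_mod_geq)
  qed
  have c1: "[int h = 1] (mod int v)"
  proof -
    have "[h = 1] (mod v)" using m1 e1 by (simp add: cong_def)
    then show ?thesis using cong_int_iff[of h 1 v] by simp
  qed
  have c2: "[int h * int y0 = int y0] (mod int v)"
  proof -
    have "[h * y0 = y0] (mod v)" using m2 e2 by (simp add: cong_def)
    then show ?thesis using cong_int_iff[of "h*y0" y0 v] by simp
  qed
  have c3: "[int h * int y0 + int h - int p = int y0 + 1] (mod int v)"
  proof -
    have le: "p \<le> h * (y0+1)" using gt by (simp add: mult.commute)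
    have "[h * (y0+1) - p = y0 + 1] (mod v)" using m3 e3 by (simp add: cong_def)
    then have "[int (h * (y0+1) - p) = int (y0 + 1)] (mod int v)" using cong_int_iff by blast
    moreover have "int (h * (y0+1) - p) = int h * int y0 + int h - int p" using le by (simp add: of_nat_diff algebra_simps)
    ultimately show ?thesis by (simp add: add.commute)
  qed
  have "[int h * int y0 + int h - int p = int y0 + 1 - int p] (mod int v)"
    using c1 c2 by (intro cong_diff cong_add) auto
  then have "[int y0 + 1 - int p = int y0 + 1] (mod int v)"
    using c3 cong_sym cong_trans by blast
  then have "[(int y0 + 1 - int p) - (int y0 + 1) = 0] (mod int v)"
    using cong_diff_iff_cong_0 by blast
  then have "int v dvd - int p" by (simp add: cong_0_iff)
  then show ?thesis by simp
qed

lemma surj_pow: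
  fixes p g :: nat
  assumes "prime p" and cop: "coprime p g" and o: "ord p g = p - 1"
  shows "(\<lambda>k. g ^ k mod p) ` {..<p-1} = {1..p-1}"
proof (rule card_subset_eq)
  show "finite {1..p-1}" by simp
  show "(\<lambda>k. g ^ k mod p) ` {..<p-1} \<subseteq> {1..p-1}"
  proof
    fix y assume "y \<in> (\<lambda>k. g ^ k mod p) ` {..<p-1}"
    then obtain k where y: "y = g ^ k mod p" by auto
    have "coprime p (g ^ k)" using cop by simp
    then have "\<not> p dvd g ^ k" using assms(1)
      by (metis coprime_common_divisor_nat dvd_refl not_prime_1)
    then have "y \<noteq> 0" using y by (simp add: dvd_eq_mod_eq_0)
    moreover have "y < p" using y assms(1) prime_gt_0_nat by simp
    ultimately show "y \<in> {1..p-1}" by simp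
  qed
  have "inj_on (\<lambda>k. g ^ k mod p) {..<ord p g}" using inj_power_mod[OF cop] .
  then have "card ((\<lambda>k. g ^ k mod p) ` {..<p-1}) = p - 1" using o by (simp add: card_image)
  then show "card ((\<lambda>k. g ^ k mod p) ` {..<p-1}) = card {1..p-1}" by simp
qed

theorem theorem7:
  fixes p g v :: nat
  assumes "prime p" and "odd p"
    and "1 < v" and "v < p - 1"
    and "g \<in> {2..p-1}" and "ord p g = p - 1"
  shows "least_cyc_period (p - 1) (gamma_seq p g v) = p - 1"
proof -
  define N where "N = p - 1"
  define s where "s = gamma_seq p g v"
  have p2: "p \<ge> 2" using assms(1) prime_ge_2_nat by blast
  have p3: "p \<ge> 3" using p2 assms(2) by presburger
  have gp: "g < p" "2 \<le> g" using assms(5) p2 by auto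
  have cop: "coprime p g"
    using assms(1) gp by (metis prime_imp_coprime dvd_imp_le not_less le_antisym zero_less_iff_neq_zero not_numeral_le_zero)
  have pow: "g ^ (a mod N) mod p = g ^ a mod p" for a
  proof -
    have "[g ^ (a mod N) = g ^ a] (mod p) = [a mod N = a] (mod ord p g)"
      using order_divides_expdiff[OF cop] .
    moreover have "[a mod N = a] (mod ord p g)" using assms(6) unfolding N_def by (simp add: cong_def)
    ultimately show ?thesis by (simp add: cong_def)
  qed
  have perN: "is_cyc_period N s N"
    unfolding is_cyc_period_def cyc_at_def
  proof (intro conjI ballI)
    show "0 < N" unfolding N_def using p3 by simp
    fix i assume i: "i \<in> {1..N}"
    have e: "i + N - 1 = (i - 1) + N" using i by simp
    have "(i + N - 1) mod N = ((i - 1) + N) mod N" using e by argo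
    also have "\<dots> = (i - 1) mod N" by simp
    also have "\<dots> = i - 1" using i by (intro mod_less) auto
    finally have "(i + N - 1) mod N = i - 1" .
    then show "s ((i + N - 1) mod N + 1) = s i" using i by simp
  qed
  have noper: False if r: "is_cyc_period N s r" "r < N" for r
  proof -
    have r0: "0 < r" using r unfolding is_cyc_period_def by simp
    have sh: "(g ^ (k + r) mod p) mod v = (g ^ k mod p) mod v" if k: "k < N" for k
    proof -
      have mem: "k + 1 \<in> {1..N}" using k by simp
      have "\<forall>i\<in>{1..N}. cyc_at N s (i + r) = s i" using r(1) unfolding is_cyc_period_def by blast
      then have "cyc_at N s (k + 1 + r) = s (k + 1)" using mem by blast
      then have "s ((k + r) mod N + 1) = s (k + 1)" unfolding cyc_at_def by simp
      then show ?thesis unfolding s_def gamma_seq_def using pow by simp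
    qed
    define h where "h = g ^ r mod p"
    have hp: "h < p" unfolding h_def using p2 by simp
    have h1: "h \<noteq> 1"
    proof
      assume "h = 1"
      then have "[g ^ r = 1] (mod p)" unfolding h_def cong_def using p2 by simp
      moreover have "[g ^ r \<noteq> 1] (mod p)" using ord_minimal[of r p g] r0 r(2) assms(6) N_def by simp
      ultimately show False by simp
    qed
    have h0: "h \<noteq> 0"
    proof
      assume "h = 0"
      then have "p dvd g ^ r" unfolding h_def by (simp add: dvd_eq_mod_eq_0)
      then have "p dvd g" using assms(1) prime_dvd_power by blast
      then show False using gp by (simp add: nat_dvd_not_less)
    qed
    have h2: "2 \<le> h" using h0 h1 by simp
    have A: "(h * y mod p) mod v = y mod v" if y: "1 \<le> y" "y \<le> p - 1" for y
    proof -
      have "y \<in> (\<lambda>k. g ^ k mod p) ` {..<p-1}" using surj_pow[OF assms(1) cop assms(6)] y by simp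
      then obtain k where k: "k < N" "y = g ^ k mod p" unfolding N_def by auto
      have "h * y mod p = g ^ (k + r) mod p" unfolding h_def k(2)
        by (simp add: mod_mult_eq power_add mult.commute)
      then show ?thesis using sh[OF k(1)] k(2) by simp
    qed
    have "v dvd p" using key_arith[OF p3 h2 hp A] by blast
    then have "v = 1 \<or> v = p" using assms(1) prime_nat_iff by blast
    then show False using assms(3,4) by auto
  qed
  have "(LEAST r. is_cyc_period N s r) = N"
  proof (rule Least_equality)
    show "is_cyc_period N s N" by (rule perN)
    fix y assume "is_cyc_period N s y"
    then show "N \<le> y" using noper by (meson not_less)
  qed
  then show ?thesis unfolding least_cyc_period_def N_def s_def .
qed

end
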